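(* The logic $\mathsf{GS4}$ has the finite model property: for every formula $\varphi$, if $\mathsf{GS4}\nvdash\varphi$, then there is a $\mathsf{GS4}$-model $\mathcal M$ with finitely many worlds such that $\mathcal M\not\models\varphi$.
   Context: Fix a countably infinite set $\mathbb P$ of propositional variables. Formulas: $\varphi,\psi ::= p\mid\bot\mid(\varphi\wedge\psi)\mid(\varphi\vee\psi)\mid(\varphi\to\psi)\mid\Diamond\varphi\mid\Box\varphi$; $\neg\varphi:=\varphi\to\bot$. A bi-intuitionistic frame is $(W,W_\bot,\preccurlyeq,\sqsubseteq)$ with $\preccurlyeq,\sqsubseteq$ preorders on $W$ and $W_\bot\subseteq W$ upward closed under both; infallible if $W_\bot=\varnothing$. A valuation $V:\mathbb P\to 2^W$ has each $V(p)$ upward closed under $\preccurlyeq$ and containing $W_\bot$; a model is $\mathcal M=(W,W_\bot,\preccurlyeq,\sqsubseteq,V)$. Satisfaction: $p$ iff $w\in V(p)$; $\bot$ iff $w\in W_\bot$; $\wedge,\vee$ pointwise; $w\models\varphi\to\psi$ iff for all $v\succcurlyeq w$, $v\models\varphi$ implies $v\models\psi$; $w\models\Diamond\varphi$ iff for all $u\succcurlyeq w$ there is $v\sqsupseteq u$ with $v\models\varphi$; $w\models\Box\varphi$ iff $v\models\varphi$ whenever $w\preccurlyeq u\sqsubseteq v$. $\mathcal M\models\varphi$ iff $\varphi$ holds at every $w\in W\setminus W_\bot$. $\sqsubseteq$ is forward confluent if $w\preccurlyeq w'$ and $w\sqsubseteq v$ imply some $v'$ with $v\preccurlyeq v'$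 and $w'\sqsubseteq v'$; backward confluent if $w\sqsubseteq v\preccurlyeq v'$ implies some $w'$ with $w\preccurlyeq w'\sqsubseteq v'$. The frame is locally linear if $w\preccurlyeq u$ and $w\preccurlyeq v$ imply $u\preccurlyeq v$ or $v\preccurlyeq u$. A $\mathsf{GS4}$-frame is an infallible, locally linear bi-intuitionistic frame in which $\sqsubseteq$ is forward and backward confluent; a $\mathsf{GS4}$-model is a model on such a frame. $\mathsf{CS4}$ is the least set of formulas containing all intuitionistic propositional tautologies and all instances of $\Box(\varphi\to\psi)\to(\Box\varphi\to\Box\psi)$, $\Box(\varphi\to\psi)\to(\Diamond\varphi\to\Diamond\psi)$, $\Box\varphi\to\varphi$, $\varphi\to\Diamond\varphi$, $\Box\varphi\to\Box\Box\varphi$, $\Diamond\Diamond\varphi\to\Diamond\varphi$, closed under modus ponens and necessitation. $\mathsf{GS4}$ is $\mathsf{CS4}$ extended with all instances of $(\Diamond\varphi\to\Box\psi)\to\Box(\varphi\to\psi)$, $\Diamond(\varphi\vee\psi)\to\Diamond\varphi\vee\Diamond\psi$, $\neg\Diamond\bot$, and $(\varphi\to\psi)\vee(\psi\to\varphi)$ (closed under the same rules). *)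

theory Defs
  imports Main
begin

datatype fm =
    Var nat
  | Bot
  | And fm fm
  | Or fm fm
  | Imp fm fm
  | Dia fm
  | Box fm

definition Neg :: "fm \<Rightarrow> fm" where
  "Neg \<phi> = Imp \<phi> Bot"

(* Hilbert-style axioms of intuitionistic propositional logic, instantiated with
   arbitrary (modal) formulas; together with modus ponens they generate exactly the
   substitution instances of intuitionistic propositional tautologies. *)
inductive ipc_axiom :: "fm \<Rightarrow> bool" where
  ax_K:    "ipc_axiom (Imp \<phi> (Imp \<psi> \<phi>))"
| ax_S:    "ipc_axiom (Imp (Imp \<phi> (Imp \<psi> \<chi>)) (Imp (Imp \<phi> \<psi>) (Imp \<phi> \<chi>)))"
| ax_AndE1: "ipc_axiom (Imp (And \<phi> \<psi>) \<phi>)"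
| ax_AndE2: "ipc_axiom (Imp (And \<phi> \<psi>) \<psi>)"
| ax_AndI: "ipc_axiom (Imp \<phi> (Imp \<psi> (And \<phi> \<psi>)))"
| ax_OrI1: "ipc_axiom (Imp \<phi> (Or \<phi> \<psi>))"
| ax_OrI2: "ipc_axiom (Imp \<psi> (Or \<phi> \<psi>))"
| ax_OrE:  "ipc_axiom (Imp (Imp \<phi> \<chi>) (Imp (Imp \<psi> \<chi>) (Imp (Or \<phi> \<psi>) \<chi>)))"
| ax_Bot:  "ipc_axiom (Imp Bot \<phi>)"

inductive cs4_axiom :: "fm \<Rightarrow> bool" where
  ax_KBox: "cs4_axiom (Imp (Box (Imp \<phi> \<psi>)) (Imp (Box \<phi>) (Box \<psi>)))"
| ax_KDia: "cs4_axiom (Imp (Box (Imp \<phi> \<psi>)) (Imp (Dia \<phi>) (Dia \<psi>)))"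
| ax_T:    "cs4_axiom (Imp (Box \<phi>) \<phi>)"
| ax_TDia: "cs4_axiom (Imp \<phi> (Dia \<phi>))"
| ax_4:    "cs4_axiom (Imp (Box \<phi>) (Box (Box \<phi>)))"
| ax_4Dia: "cs4_axiom (Imp (Dia (Dia \<phi>)) (Dia \<phi>))"

inductive gs4_extra_axiom :: "fm \<Rightarrow> bool" where
  ax_FS:   "gs4_extra_axiom (Imp (Imp (Dia \<phi>) (Box \<psi>)) (Box (Imp \<phi> \<psi>)))"
| ax_DP:   "gs4_extra_axiom (Imp (Dia (Or \<phi> \<psi>)) (Or (Dia \<phi>) (Dia \<psi>)))"
| ax_N:    "gs4_extra_axiom (Neg (Dia Bot))"
| ax_GD:   "gs4_extra_axiom (Or (Imp \<phi> \<psi>) (Imp \<psi> \<phi>))"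

inductive GS4_derivable :: "fm \<Rightarrow> bool" where
  ipc:  "ipc_axiom \<phi> \<Longrightarrow> GS4_derivable \<phi>"
| cs4:  "cs4_axiom \<phi> \<Longrightarrow> GS4_derivable \<phi>"
| gs4:  "gs4_extra_axiom \<phi> \<Longrightarrow> GS4_derivable \<phi>"
| mp:   "GS4_derivable (Imp \<phi> \<psi>) \<Longrightarrow> GS4_derivable \<phi> \<Longrightarrow> GS4_derivable \<psi>"
| nec:  "GS4_derivable \<phi> \<Longrightarrow> GS4_derivable (Box \<phi>)"

(* Models: W carrier, Wb fallible worlds, Le = \<preccurlyeq>, Sq = \<sqsubseteq>, V valuation *)
definition preorder_on :: "'w set \<Rightarrow> ('w \<times> 'w) set \<Rightarrow> bool" where
  "preorder_on W R \<longleftrightarrow> R \<subseteq> W \<times> W \<and> refl_on W R \<and> trans R"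

definition up_closed :: "('w \<times> 'w) set \<Rightarrow> 'w set \<Rightarrow> bool" where
  "up_closed R A \<longleftrightarrow> (\<forall>w v. w \<in> A \<longrightarrow> (w, v) \<in> R \<longrightarrow> v \<in> A)"

definition biint_frame :: "'w set \<Rightarrow> 'w set \<Rightarrow> ('w \<times> 'w) set \<Rightarrow> ('w \<times> 'w) set \<Rightarrow> bool" where
  "biint_frame W Wb Le Sq \<longleftrightarrow> preorder_on W Le \<and> preorder_on W Sq \<and> Wb \<subseteq> W
     \<and> up_closed Le Wb \<and> up_closed Sq Wb"

definition biint_model :: "'w set \<Rightarrow> 'w set \<Rightarrow> ('w \<times> 'w) set \<Rightarrow> ('w \<times> 'w) set
     \<Rightarrow> (nat \<Rightarrow> 'w set) \<Rightarrow> bool" where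
  "biint_model W Wb Le Sq V \<longleftrightarrow> biint_frame W Wb Le Sq
     \<and> (\<forall>p. V p \<subseteq> W \<and> up_closed Le (V p) \<and> Wb \<subseteq> V p)"

definition forward_confluent :: "('w \<times> 'w) set \<Rightarrow> ('w \<times> 'w) set \<Rightarrow> bool" where
  "forward_confluent Le Sq \<longleftrightarrow>
     (\<forall>w w' v. (w, w') \<in> Le \<longrightarrow> (w, v) \<in> Sq \<longrightarrow> (\<exists>v'. (v, v') \<in> Le \<and> (w', v') \<in> Sq))"

definition backward_confluent :: "('w \<times> 'w) set \<Rightarrow> ('w \<times> 'w) set \<Rightarrow> bool" where
  "backward_confluent Le Sq \<longleftrightarrow>
     (\<forall>w v v'. (w, v) \<in> Sq \<longrightarrow> (v, v') \<in> Le \<longrightarrow> (\<exists>w'. (w, w') \<in> Le \<and> (w', v') \<in> Sq))"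

definition locally_linear :: "('w \<times> 'w) set \<Rightarrow> bool" where
  "locally_linear Le \<longleftrightarrow>
     (\<forall>w u v. (w, u) \<in> Le \<longrightarrow> (w, v) \<in> Le \<longrightarrow> (u, v) \<in> Le \<or> (v, u) \<in> Le)"

definition GS4_model :: "'w set \<Rightarrow> 'w set \<Rightarrow> ('w \<times> 'w) set \<Rightarrow> ('w \<times> 'w) set
     \<Rightarrow> (nat \<Rightarrow> 'w set) \<Rightarrow> bool" where
  "GS4_model W Wb Le Sq V \<longleftrightarrow> biint_model W Wb Le Sq V \<and> Wb = {}
     \<and> locally_linear Le \<and> forward_confluent Le Sq \<and> backward_confluent Le Sq"

fun sat :: "'w set \<Rightarrow> ('w \<times> 'w) set \<Rightarrow> ('w \<times> 'w) set \<Rightarrow> (nat \<Rightarrow> 'w set)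
     \<Rightarrow> 'w \<Rightarrow> fm \<Rightarrow> bool" where
  "sat Wb Le Sq V w (Var p) \<longleftrightarrow> w \<in> V p"
| "sat Wb Le Sq V w Bot \<longleftrightarrow> w \<in> Wb"
| "sat Wb Le Sq V w (And \<phi> \<psi>) \<longleftrightarrow> sat Wb Le Sq V w \<phi> \<and> sat Wb Le Sq V w \<psi>"
| "sat Wb Le Sq V w (Or \<phi> \<psi>) \<longleftrightarrow> sat Wb Le Sq V w \<phi> \<or> sat Wb Le Sq V w \<psi>"
| "sat Wb Le Sq V w (Imp \<phi> \<psi>) \<longleftrightarrow>
     (\<forall>v. (w, v) \<in> Le \<longrightarrow> sat Wb Le Sq V v \<phi> \<longrightarrow> sat Wb Le Sq V v \<psi>)"
| "sat Wb Le Sq V w (Dia \<phi>) \<longleftrightarrow>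
     (\<forall>u. (w, u) \<in> Le \<longrightarrow> (\<exists>v. (u, v) \<in> Sq \<and> sat Wb Le Sq V v \<phi>))"
| "sat Wb Le Sq V w (Box \<phi>) \<longleftrightarrow>
     (\<forall>u v. (w, u) \<in> Le \<longrightarrow> (u, v) \<in> Sq \<longrightarrow> sat Wb Le Sq V v \<phi>)"

definition valid_in :: "'w set \<Rightarrow> 'w set \<Rightarrow> ('w \<times> 'w) set \<Rightarrow> ('w \<times> 'w) set
     \<Rightarrow> (nat \<Rightarrow> 'w set) \<Rightarrow> fm \<Rightarrow> bool" where
  "valid_in W Wb Le Sq V \<phi> \<longleftrightarrow> (\<forall>w \<in> W - Wb. sat Wb Le Sq V w \<phi>)"

end

theory Submission
  imports Defs
begin

inductive der :: "fm set \<Rightarrow> fm \<Rightarrow> bool" for G where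
  hyp: "a \<in> G \<Longrightarrow> der G a"
| ax: "GS4_derivable a \<Longrightarrow> der G a"
| mpp: "der G (Imp a b) \<Longrightarrow> der G a \<Longrightarrow> der G b"

lemma der_empty: "der G a \<Longrightarrow> G = {} \<Longrightarrow> GS4_derivable a"
  by (induction rule: der.induct) (auto intro: GS4_derivable.mp)

lemma der_mono: "der G a \<Longrightarrow> G \<subseteq> H \<Longrightarrow> der H a"
  by (induction rule: der.induct) (auto intro: der.intros)

lemma ipc_thm: "ipc_axiom a \<Longrightarrow> der G a"
  by (intro der.ax GS4_derivable.ipc)

lemma cs4_thm: "cs4_axiom a \<Longrightarrow> der G a"
  by (intro der.ax GS4_derivable.cs4)

lemma gs4_thm: "gs4_extra_axiom a \<Longrightarrow> der G a"
  by (intro der.ax GS4_derivable.gs4)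

lemma GS_id: "GS4_derivable (Imp a a)"
proof -
  have 1: "GS4_derivable (Imp (Imp a (Imp (Imp a a) a)) (Imp (Imp a (Imp a a)) (Imp a a)))"
    by (intro GS4_derivable.ipc ipc_axiom.intros)
  have 2: "GS4_derivable (Imp a (Imp (Imp a a) a))"
    by (intro GS4_derivable.ipc ipc_axiom.intros)
  have 3: "GS4_derivable (Imp a (Imp a a))"
    by (intro GS4_derivable.ipc ipc_axiom.intros)
  show ?thesis using 1 2 3 by (meson GS4_derivable.mp)
qed

lemma ded: "der (insert a G) b \<Longrightarrow> der G (Imp a b)"
proof (induction rule: der.induct)
  case (hyp b)
  then show ?case
  proof
    assume "b = a" then show ?thesis using GS_id der.ax by blast
  next
    assume "b \<in> G"
    then show ?thesis by (meson der.hyp der.mpp ipc_thm ipc_axiom.ax_K)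
  qed
next
  case (ax b)
  then show ?case by (meson der.ax der.mpp ipc_thm ipc_axiom.ax_K)
next
  case (mpp b c)
  then show ?case by (meson der.mpp ipc_thm ipc_axiom.ax_S)
qed

lemma weak: "der G a \<Longrightarrow> der (insert b G) a"
  using der_mono by blast

lemma undo_ded: "der G (Imp a b) \<Longrightarrow> der (insert a G) b"
  by (meson der.hyp der.mpp insertI1 weak)

lemma cut: "der G a \<Longrightarrow> der (insert a G) b \<Longrightarrow> der G b"
  using ded der.mpp by blast

lemma andI: "der G a \<Longrightarrow> der G b \<Longrightarrow> der G (And a b)"
  by (meson der.mpp ipc_thm ipc_axiom.ax_AndI)
lemma andE1: "der G (And a b) \<Longrightarrow> der G a"
  by (meson der.mpp ipc_thm ipc_axiom.ax_AndE1)
lemma andE2: "der G (And a b) \<Longrightarrow> der G b"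
  by (meson der.mpp ipc_thm ipc_axiom.ax_AndE2)
lemma orI1: "der G a \<Longrightarrow> der G (Or a b)"
  by (meson der.mpp ipc_thm ipc_axiom.ax_OrI1)
lemma orI2: "der G b \<Longrightarrow> der G (Or a b)"
  by (meson der.mpp ipc_thm ipc_axiom.ax_OrI2)
lemma orE: "der G (Or a b) \<Longrightarrow> der (insert a G) c \<Longrightarrow> der (insert b G) c \<Longrightarrow> der G c"
  by (meson ded der.mpp ipc_thm ipc_axiom.ax_OrE)
lemma botE: "der G Bot \<Longrightarrow> der G a"
  by (meson der.mpp ipc_thm ipc_axiom.ax_Bot)

lemma box_lift: "der G a \<Longrightarrow> der (Box ` G) (Box a)"
proof (induction rule: der.induct)
  case (hyp a) then show ?case by (simp add: der.hyp)
next
  case (ax a) then show ?case by (simp add: der.ax GS4_derivable.nec)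
next
  case (mpp a b)
  then show ?case by (meson der.mpp cs4_thm cs4_axiom.ax_KBox)
qed

lemma box_mono: "der {} (Imp a b) \<Longrightarrow> der G (Imp (Box a) (Box b))"
  by (meson der.mpp der.ax der_empty GS4_derivable.nec cs4_thm cs4_axiom.ax_KBox)

lemma dia_mono: "der {} (Imp a b) \<Longrightarrow> der G (Imp (Dia a) (Dia b))"
  by (meson der.mpp der.ax der_empty GS4_derivable.nec cs4_thm cs4_axiom.ax_KDia)

lemma compact: "der G a \<Longrightarrow> \<exists>F. finite F \<and> F \<subseteq> G \<and> der F a"
proof (induction rule: der.induct)
  case (hyp a) then show ?case by (rule_tac x="{a}" in exI) (auto intro: der.hyp)
next
  case (ax a) then show ?case by (rule_tac x="{}" in exI) (auto intro: der.ax)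
next
  case (mpp a b)
  then obtain F1 F2 where "finite F1" "F1 \<subseteq> G" "der F1 (Imp a b)" "finite F2" "F2 \<subseteq> G" "der F2 a"
    by blast
  then show ?case
    by (rule_tac x="F1 \<union> F2" in exI) (meson der.mpp der_mono finite_UnI le_sup_iff sup_ge1 sup_ge2)
qed

fun disj :: "fm list \<Rightarrow> fm" where
  "disj [] = Bot"
| "disj (x # xs) = Or x (disj xs)"

lemma disj_app1: "der G (disj L1) \<Longrightarrow> der G (disj (L1 @ L2))"
proof (induction L1 arbitrary: G)
  case Nil then show ?case by (simp add: botE)
next
  case (Cons x L1)
  then show ?case
    by simp (meson der.hyp insertI1 orE orI1 orI2)
qed

lemma disj_app2: "der G (disj L2) \<Longrightarrow> der G (disj (L1 @ L2))"
  by (induction L1 arbitrary: G) (auto intro: orI2)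

definition thy :: "fm set \<Rightarrow> bool" where
  "thy G \<longleftrightarrow> (\<forall>a. der G a \<longrightarrow> a \<in> G)"

definition pth :: "fm set \<Rightarrow> bool" where
  "pth G \<longleftrightarrow> thy G \<and> Bot \<notin> G \<and> (\<forall>a b. Or a b \<in> G \<longrightarrow> a \<in> G \<or> b \<in> G)"

lemma pth_der: "pth G \<Longrightarrow> der G a \<Longrightarrow> a \<in> G"
  by (simp add: pth_def thy_def)

lemma finite_chain_sub:
  assumes "finite F" "F \<subseteq> \<Union>C" "C \<noteq> {}" "C \<in> chains A"
  shows "\<exists>X\<in>C. F \<subseteq> X"
  using assms(1,2)
proof (induction F rule: finite_induct)
  case empty then show ?case using assms(3) by blast
next
  case (insert x F)
  then obtain X where X: "X \<in> C" "F \<subseteq> X" by blast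
  obtain Y where Y: "Y \<in> C" "x \<in> Y" using insert.prems by blast
  have "X \<subseteq> Y \<or> Y \<subseteq> X" using assms(4) X Y unfolding chains_def chain_subset_def by blast
  then show ?case using X Y by blast
qed

lemma lindenbaum:
  assumes "\<not> (\<exists>L. set L \<subseteq> Th \<and> der G (disj L))"
  shows "\<exists>D. pth D \<and> G \<subseteq> D \<and> D \<inter> Th = {}"
proof -
  define A where "A = {D. G \<subseteq> D \<and> \<not> (\<exists>L. set L \<subseteq> Th \<and> der D (disj L))}"
  have ZZ: "\<forall>C\<in>chains A. \<exists>U\<in>A. \<forall>X\<in>C. X \<subseteq> U"
  proof
    fix C assume C: "C \<in> chains A"
    show "\<exists>U\<in>A. \<forall>X\<in>C. X \<subseteq> U"
    proof (cases "C = {}")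
      case True
      have "G \<in> A" using assms unfolding A_def by simp
      show ?thesis
      proof (rule bexI)
        show "\<forall>X\<in>C. X \<subseteq> G" using True by simp
        show "G \<in> A" by fact
      qed
    next
      case False
      have CA: "C \<subseteq> A" using C unfolding chains_def by blast
      obtain X0 where "X0 \<in> C" using False by blast
      then have "X0 \<in> A" using CA by blast
      then have "G \<subseteq> X0" by (simp add: A_def)
      then have "G \<subseteq> \<Union>C" using \<open>X0 \<in> C\<close> by blast
      moreover have "\<not> (\<exists>L. set L \<subseteq> Th \<and> der (\<Union>C) (disj L))"
      proof
        assume "\<exists>L. set L \<subseteq> Th \<and> der (\<Union>C) (disj L)"
        then obtain L where L: "set L \<subseteq> Th" "der (\<Union>C) (disj L)" by blast
        obtain F where F: "finite F" "F \<subseteq> \<Union>C" "der F (disj L)" using compact[OF L(2)] by blast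
        then obtain X where "X \<in> C" "F \<subseteq> X" using finite_chain_sub[OF F(1,2) False C] by blast
        then have XA: "X \<in> A" "der X (disj L)" using CA der_mono[OF F(3)] by blast+
        from XA(1) have "\<not> (\<exists>L. set L \<subseteq> Th \<and> der X (disj L))" by (simp add: A_def)
        then show False using L XA(2) by blast
      qed
      ultimately have "\<Union>C \<in> A" by (simp add: A_def)
      then show ?thesis by (rule bexI[rotated]) auto
    qed
  qed
  then obtain M where M: "M \<in> A" and max: "\<forall>X\<in>A. M \<subseteq> X \<longrightarrow> X = M"
    using Zorn_Lemma2[OF ZZ] by blast
  have GM: "G \<subseteq> M" and nM: "\<not> (\<exists>L. set L \<subseteq> Th \<and> der M (disj L))" using M by (simp_all add: A_def)
  have ext: "\<exists>L. set L \<subseteq> Th \<and> der (insert a M) (disj L)" if "a \<notin> M" for a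
  proof (rule ccontr)
    assume "\<not> ?thesis"
    then have "insert a M \<in> A" using GM by (auto simp add: A_def)
    then have "insert a M = M" using max by blast
    then show False using that by blast
  qed
  have th: "thy M"
    unfolding thy_def
  proof (intro allI impI)
    fix a assume "der M a"
    show "a \<in> M"
    proof (rule ccontr)
      assume "a \<notin> M"
      then obtain L where "set L \<subseteq> Th" "der (insert a M) (disj L)" using ext by blast
      then show False using nM cut[OF \<open>der M a\<close>] by blast
    qed
  qed
  have bot: "Bot \<notin> M"
  proof
    assume "Bot \<in> M"
    hence "der M (disj [])" by (simp add: der.hyp)
    hence "\<exists>L. set L \<subseteq> Th \<and> der M (disj L)" by (rule_tac x="[]" in exI) simp
    with nM show False by blast
  qed
  have pr: "a \<in> M \<or> b \<in> M" if "Or a b \<in> M" for a b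
  proof (rule ccontr)
    assume "\<not> ?thesis"
    then obtain L1 L2 where L: "set L1 \<subseteq> Th" "der (insert a M) (disj L1)"
      "set L2 \<subseteq> Th" "der (insert b M) (disj L2)" using ext by blast
    have "der M (disj (L1 @ L2))"
      using orE[OF der.hyp[OF that] disj_app1[OF L(2)] disj_app2[OF L(4)]] .
    moreover have "set (L1 @ L2) \<subseteq> Th" using L by simp
    ultimately show False using nM by blast
  qed
  have dis: "M \<inter> Th = {}"
  proof (rule ccontr)
    assume "M \<inter> Th \<noteq> {}"
    then obtain t where "t \<in> M" "t \<in> Th" by blast
    then have "der M (disj [t])" by (simp add: der.hyp orI1)
    moreover have "set [t] \<subseteq> Th" using \<open>t \<in> Th\<close> by simp
    ultimately show False using nM by blast
  qed
  show ?thesis using th bot pr dis GM unfolding pth_def by blast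
qed

lemma disj_single: "set L \<subseteq> {a} \<Longrightarrow> der G (disj L) \<Longrightarrow> der G a"
proof (induction L arbitrary: G)
  case Nil then show ?case by (simp add: botE)
next
  case (Cons x L)
  then show ?case by simp (meson der.hyp insertI1 orE)
qed

lemma lindenbaum1:
  assumes "\<not> der G a"
  shows "\<exists>D. pth D \<and> G \<subseteq> D \<and> a \<notin> D"
proof -
  have "\<not> (\<exists>L. set L \<subseteq> {a} \<and> der G (disj L))" using assms disj_single by blast
  then show ?thesis using lindenbaum by blast
qed

abbreviation top :: fm where "top \<equiv> Imp Bot Bot"

lemma der_top: "der G top" using GS_id der.ax by blast

lemma thm_any: "der {} a \<Longrightarrow> der G a" using der_mono by blast

lemma comp: "der G (Imp a b) \<Longrightarrow> der G (Imp b c) \<Longrightarrow> der G (Imp a c)"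
  by (meson ded der.mpp undo_ded weak)

lemma pth_mp: "pth G \<Longrightarrow> Imp a b \<in> G \<Longrightarrow> a \<in> G \<Longrightarrow> b \<in> G"
  by (meson der.hyp der.mpp pth_der)

lemma pth_thm: "pth G \<Longrightarrow> der {} a \<Longrightarrow> a \<in> G"
  using pth_der thm_any by blast

lemma pth_imp: "pth G \<Longrightarrow> der {} (Imp a b) \<Longrightarrow> a \<in> G \<Longrightarrow> b \<in> G"
  using pth_mp pth_thm by blast

lemma pth_bot: "pth G \<Longrightarrow> Bot \<notin> G" by (simp add: pth_def)
lemma pth_or: "pth G \<Longrightarrow> Or a b \<in> G \<Longrightarrow> a \<in> G \<or> b \<in> G" by (simp add: pth_def)

lemma linear:
  assumes "pth G" "pth D1" "pth D2" "G \<subseteq> D1" "G \<subseteq> D2"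
  shows "D1 \<subseteq> D2 \<or> D2 \<subseteq> D1"
proof (rule ccontr)
  assume "\<not> ?thesis"
  then obtain a b where ab: "a \<in> D1" "a \<notin> D2" "b \<in> D2" "b \<notin> D1" by blast
  have "Or (Imp a b) (Imp b a) \<in> G"
    using assms(1) pth_thm der.ax GS4_derivable.gs4 gs4_extra_axiom.ax_GD by blast
  then have "Imp a b \<in> G \<or> Imp b a \<in> G" using assms(1) pth_or by blast
  then show False
  proof
    assume "Imp a b \<in> G" then have "b \<in> D1" using assms pth_mp ab by blast
    then show False using ab by blast
  next
    assume "Imp b a \<in> G" then have "a \<in> D2" using assms pth_mp ab by blast
    then show False using ab by blast
  qed
qed

definition boxp :: "fm set \<Rightarrow> fm set" where
  "boxp G = {a. Box a \<in> G}"

definition sqc :: "fm set \<Rightarrow> fm set \<Rightarrow> bool" where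
  "sqc G D \<longleftrightarrow> (\<forall>a. Box a \<in> G \<longrightarrow> a \<in> D) \<and> (\<forall>a. a \<in> D \<longrightarrow> Dia a \<in> G)"

lemma box_in:
  assumes "pth G" "der (boxp G) a"
  shows "Box a \<in> G"
proof -
  have "der (Box ` boxp G) (Box a)" using box_lift[OF assms(2)] .
  moreover have "Box ` boxp G \<subseteq> G" unfolding boxp_def by blast
  ultimately show ?thesis using assms(1) der_mono pth_der by blast
qed

lemma dia_disj_notin:
  assumes "pth G" "set L \<subseteq> {b. Dia b \<notin> G}"
  shows "Dia (disj L) \<notin> G"
  using assms(2)
proof (induction L)
  case Nil
  have "Imp (Dia Bot) Bot \<in> G"
    using assms(1) pth_thm der.ax GS4_derivable.gs4 gs4_extra_axiom.ax_N unfolding Neg_def by metis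
  then show ?case using assms(1) pth_mp pth_bot by fastforce
next
  case (Cons x L)
  show ?case
  proof
    assume "Dia (disj (x # L)) \<in> G"
    then have "Dia (Or x (disj L)) \<in> G" by simp
    moreover have "der {} (Imp (Dia (Or x (disj L))) (Or (Dia x) (Dia (disj L))))"
      using der.ax GS4_derivable.gs4 gs4_extra_axiom.ax_DP by blast
    ultimately have "Or (Dia x) (Dia (disj L)) \<in> G" using assms(1) pth_imp by blast
    then have "Dia x \<in> G \<or> Dia (disj L) \<in> G" using assms(1) pth_or by blast
    then show False using Cons by auto
  qed
qed

lemma split_der: "der (A \<union> B) c \<Longrightarrow> \<exists>s. der A s \<and> der B (Imp s c)"
proof (induction rule: der.induct)
  case (hyp c)
  then show ?case
  proof
    assume "c \<in> A"
    then show ?thesis using GS_id der.ax der.hyp by blast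
  next
    assume "c \<in> B"
    then have "der B (Imp top c)" by (meson der.hyp der.mpp ipc_thm ipc_axiom.ax_K)
    then show ?thesis using der_top by blast
  qed
next
  case (ax c)
  then have "der B (Imp top c)" by (meson der.ax der.mpp ipc_thm ipc_axiom.ax_K)
  then show ?case using der_top by blast
next
  case (mpp a b)
  then obtain s1 s2 where s: "der A s1" "der B (Imp s1 (Imp a b))" "der A s2" "der B (Imp s2 a)"
    by blast
  have "der (insert (And s1 s2) B) b"
  proof -
    let ?H = "insert (And s1 s2) B"
    have h: "der ?H (And s1 s2)" by (simp add: der.hyp)
    have "der ?H (Imp a b)" using der.mpp[OF weak[OF s(2)] andE1[OF h]] .
    moreover have "der ?H a" using der.mpp[OF weak[OF s(4)] andE2[OF h]] .
    ultimately show ?thesis using der.mpp by blast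
  qed
  then show ?case using s andI ded by blast
qed

lemma lemmaX:
  assumes G: "pth G" and S: "\<forall>s. der S s \<longrightarrow> Dia s \<in> G"
  shows "\<exists>D. pth D \<and> S \<subseteq> D \<and> sqc G D"
proof -
  let ?Th = "{b. Dia b \<notin> G}"
  have "\<not> (\<exists>L. set L \<subseteq> ?Th \<and> der (S \<union> boxp G) (disj L))"
  proof
    assume "\<exists>L. set L \<subseteq> ?Th \<and> der (S \<union> boxp G) (disj L)"
    then obtain L where L: "set L \<subseteq> ?Th" "der (S \<union> boxp G) (disj L)" by blast
    obtain s where s: "der S s" "der (boxp G) (Imp s (disj L))" using split_der[OF L(2)] by blast
    have "Box (Imp s (disj L)) \<in> G" using box_in[OF G s(2)] .
    moreover have "Dia s \<in> G" using S s(1) by blast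
    moreover have "Imp (Box (Imp s (disj L))) (Imp (Dia s) (Dia (disj L))) \<in> G"
      using G pth_thm der.ax GS4_derivable.cs4 cs4_axiom.ax_KDia by blast
    ultimately have "Dia (disj L) \<in> G" using G pth_mp by blast
    then show False using dia_disj_notin[OF G L(1)] by blast
  qed
  then obtain D where D: "pth D" "S \<union> boxp G \<subseteq> D" "D \<inter> ?Th = {}"
    using lindenbaum by blast
  have "sqc G D" unfolding sqc_def using D unfolding boxp_def by blast
  then show ?thesis using D by blast
qed

lemma dia_Z:
  assumes D: "pth D" and d: "der (Dia ` D) s"
  shows "\<exists>d\<in>D. der {} (Imp (Dia d) s)"
  using d
proof (induction rule: der.induct)
  case (hyp a)
  then show ?case using GS_id der.ax by blast
next
  case (ax a)
  have "top \<in> D" using D pth_thm der_top by blast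
  moreover have "der {} (Imp (Dia top) a)" using ax by (meson der.ax der.mpp ipc_thm ipc_axiom.ax_K)
  ultimately show ?case by blast
next
  case (mpp a b)
  then obtain d1 d2 where d: "d1 \<in> D" "der {} (Imp (Dia d1) (Imp a b))" "d2 \<in> D" "der {} (Imp (Dia d2) a)"
    by blast
  have "And d1 d2 \<in> D" using D d pth_der andI der.hyp by blast
  moreover have "der {} (Imp (Dia (And d1 d2)) b)"
  proof -
    have 1: "der {} (Imp (Dia (And d1 d2)) (Dia d1))" using dia_mono ipc_thm ipc_axiom.ax_AndE1 by blast
    have 2: "der {} (Imp (Dia (And d1 d2)) (Dia d2))" using dia_mono ipc_thm ipc_axiom.ax_AndE2 by blast
    let ?H = "{Dia (And d1 d2)}"
    have "der ?H (Dia d1)" "der ?H (Dia d2)" using undo_ded 1 2 by blast+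
    then have "der ?H (Imp a b)" "der ?H a" using d thm_any der.mpp by blast+
    then have "der ?H b" using der.mpp by blast
    then show ?thesis using ded by blast
  qed
  ultimately show ?case by blast
qed

lemma box_disj:
  assumes D: "pth D" and L: "set L \<subseteq> {Box b | b. b \<notin> D}"
  shows "\<exists>c. c \<notin> D \<and> der {} (Imp (disj L) (Box c))"
  using L
proof (induction L)
  case Nil
  then show ?case using D pth_bot ipc_thm ipc_axiom.ax_Bot by (metis disj.simps(1))
next
  case (Cons x L)
  then obtain b where b: "x = Box b" "b \<notin> D" by auto
  obtain c where c: "c \<notin> D" "der {} (Imp (disj L) (Box c))" using Cons by auto
  have "Or b c \<notin> D" using D b c pth_or by blast
  moreover have "der {} (Imp (Or (Box b) (disj L)) (Box (Or b c)))"
  proof -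
    let ?H = "{Or (Box b) (disj L)}"
    have "der (insert (Box b) ?H) (Box (Or b c))"
      using box_mono[OF ipc_thm[OF ipc_axiom.ax_OrI1]] undo_ded by blast
    moreover have "der (insert (disj L) ?H) (Box (Or b c))"
    proof -
      have "der (insert (disj L) ?H) (Box c)" using undo_ded[OF thm_any[OF c(2)]] .
      then show ?thesis using box_mono[OF ipc_thm[OF ipc_axiom.ax_OrI2]] der.mpp by blast
    qed
    ultimately have "der ?H (Box (Or b c))" using orE der.hyp by blast
    then show ?thesis using ded by blast
  qed
  ultimately show ?case using b by auto
qed

lemma lemmaY:
  assumes G: "pth G" and D: "pth D" and B: "boxp G \<subseteq> D"
  shows "\<exists>G'. pth G' \<and> G \<subseteq> G' \<and> sqc G' D"
proof -
  let ?Th = "{Box b | b. b \<notin> D}"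
  have "\<not> (\<exists>L. set L \<subseteq> ?Th \<and> der (G \<union> Dia ` D) (disj L))"
  proof
    assume "\<exists>L. set L \<subseteq> ?Th \<and> der (G \<union> Dia ` D) (disj L)"
    then obtain L where L: "set L \<subseteq> ?Th" "der (Dia ` D \<union> G) (disj L)" by (auto simp: Un_commute)
    obtain s where s: "der (Dia ` D) s" "der G (Imp s (disj L))" using split_der[OF L(2)] by blast
    obtain d where d: "d \<in> D" "der {} (Imp (Dia d) s)" using dia_Z[OF D s(1)] by blast
    obtain c where c: "c \<notin> D" "der {} (Imp (disj L) (Box c))" using box_disj[OF D L(1)] by blast
    have "der G (Imp (Dia d) (Box c))" using comp[OF comp[OF thm_any[OF d(2)] s(2)] thm_any[OF c(2)]] .
    then have "Imp (Dia d) (Box c) \<in> G" using G pth_der by blast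
    moreover have "Imp (Imp (Dia d) (Box c)) (Box (Imp d c)) \<in> G"
      using G pth_thm der.ax GS4_derivable.gs4 gs4_extra_axiom.ax_FS by blast
    ultimately have "Box (Imp d c) \<in> G" using G pth_mp by blast
    then have "Imp d c \<in> D" using B unfolding boxp_def by blast
    then have "c \<in> D" using D d pth_mp by blast
    then show False using c by blast
  qed
  then obtain G' where G': "pth G'" "G \<union> Dia ` D \<subseteq> G'" "G' \<inter> ?Th = {}"
    using lindenbaum by blast
  have "sqc G' D" unfolding sqc_def using G' by blast
  then show ?thesis using G' by blast
qed

lemma box_exist:
  assumes G: "pth G" and a: "Box a \<notin> G"
  shows "\<exists>G' D. pth G' \<and> pth D \<and> G \<subseteq> G' \<and> sqc G' D \<and> a \<notin> D"
proof -
  have "\<not> der (boxp G) a" using box_in G a by blast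
  then obtain D where D: "pth D" "boxp G \<subseteq> D" "a \<notin> D" using lindenbaum1 by blast
  then show ?thesis using lemmaY[OF G D(1,2)] by blast
qed

lemma dia_exist:
  assumes G: "pth G" and a: "Dia a \<in> G"
  shows "\<exists>D. pth D \<and> sqc G D \<and> a \<in> D"
proof -
  have "\<forall>s. der {a} s \<longrightarrow> Dia s \<in> G"
  proof (intro allI impI)
    fix s assume "der {a} s"
    then have "der {} (Imp a s)" using ded by blast
    then have "Imp (Dia a) (Dia s) \<in> G" using dia_mono G pth_der by blast
    then show "Dia s \<in> G" using G a pth_mp by blast
  qed
  then show ?thesis using lemmaX[OF G] by blast
qed

lemma fconf:
  assumes "pth G" "pth G'" "G \<subseteq> G'" "pth D" "sqc G D"
  shows "\<exists>D'. pth D' \<and> D \<subseteq> D' \<and> sqc G' D'"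
proof -
  have "\<forall>s. der D s \<longrightarrow> Dia s \<in> G'"
    using assms pth_der unfolding sqc_def by blast
  then show ?thesis using lemmaX[OF assms(2)] by blast
qed

lemma bconf:
  assumes "pth G" "pth D" "sqc G D" "pth D'" "D \<subseteq> D'"
  shows "\<exists>G'. pth G' \<and> G \<subseteq> G' \<and> sqc G' D'"
proof -
  have "boxp G \<subseteq> D'" using assms unfolding sqc_def boxp_def by blast
  then show ?thesis using lemmaY assms by blast
qed

lemma sqc_box4: "pth G \<Longrightarrow> sqc G D \<Longrightarrow> Box a \<in> G \<Longrightarrow> Box a \<in> D"
  unfolding sqc_def by (meson pth_imp der.ax GS4_derivable.cs4 cs4_axiom.ax_4)

lemma sqc_dia4: "pth G \<Longrightarrow> sqc G D \<Longrightarrow> Dia a \<in> D \<Longrightarrow> Dia a \<in> G"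
  unfolding sqc_def by (meson pth_imp der.ax GS4_derivable.cs4 cs4_axiom.ax_4Dia)

lemma pth_T: "pth G \<Longrightarrow> Box a \<in> G \<Longrightarrow> a \<in> G"
  by (meson pth_imp der.ax GS4_derivable.cs4 cs4_axiom.ax_T)

lemma pth_TD: "pth G \<Longrightarrow> a \<in> G \<Longrightarrow> Dia a \<in> G"
  by (meson pth_imp der.ax GS4_derivable.cs4 cs4_axiom.ax_TDia)

fun sub :: "fm \<Rightarrow> fm set" where
  "sub (Var p) = {Var p}"
| "sub Bot = {Bot}"
| "sub (And a b) = insert (And a b) (sub a \<union> sub b)"
| "sub (Or a b) = insert (Or a b) (sub a \<union> sub b)"
| "sub (Imp a b) = insert (Imp a b) (sub a \<union> sub b)"
| "sub (Dia a) = insert (Dia a) (sub a)"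
| "sub (Box a) = insert (Box a) (sub a)"

lemma finite_sub: "finite (sub a)" by (induction a) auto
lemma sub_refl: "a \<in> sub a" by (cases a) auto
lemma sub_trans: "b \<in> sub a \<Longrightarrow> sub b \<subseteq> sub a" by (induction a) auto

definition tp :: "fm set \<Rightarrow> fm set \<Rightarrow> fm set" where "tp S G = G \<inter> S"
definition Cw :: "fm set \<Rightarrow> fm set \<Rightarrow> fm set set" where
  "Cw S G = {tp S D | D. pth D \<and> G \<subseteq> D}"
definition Wc :: "fm set \<Rightarrow> fm set set set" where "Wc S = {Cw S G | G. pth G}"
definition LeC :: "fm set \<Rightarrow> (fm set set \<times> fm set set) set" where
  "LeC S = {(w, w'). w \<in> Wc S \<and> w' \<in> Wc S \<and> w' \<subseteq> w \<and> (\<forall>s\<in>w. \<forall>s'\<in>w'. s' \<subseteq> s \<longrightarrow> s \<in> w')}"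
definition Bc :: "fm set \<Rightarrow> (fm set set \<times> fm set set) set" where
  "Bc S = {(Cw S G, Cw S D) | G D. pth G \<and> pth D \<and> sqc G D}"
definition SqC :: "fm set \<Rightarrow> (fm set set \<times> fm set set) set" where
  "SqC S = Id_on (Wc S) \<union> (Bc S)\<^sup>+"
definition Vc :: "fm set \<Rightarrow> nat \<Rightarrow> fm set set set" where
  "Vc S p = {w \<in> Wc S. \<exists>G. pth G \<and> w = Cw S G \<and> Var p \<in> tp S G}"

lemma Cw_in: "pth G \<Longrightarrow> Cw S G \<in> Wc S" unfolding Wc_def by blast

lemma tp_in: "pth G \<Longrightarrow> tp S G \<in> Cw S G" unfolding Cw_def by blast

lemma tp_min: "s \<in> Cw S G \<Longrightarrow> tp S G \<subseteq> s" unfolding Cw_def tp_def by blast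

lemma Cw_tp: "pth G \<Longrightarrow> pth G' \<Longrightarrow> Cw S G = Cw S G' \<Longrightarrow> tp S G = tp S G'"
  by (metis subset_antisym tp_in tp_min)

lemma L2:
  assumes "pth G" "pth G'" "G \<subseteq> G'"
  shows "Cw S G' = {s \<in> Cw S G. tp S G' \<subseteq> s}"
proof
  show "Cw S G' \<subseteq> {s \<in> Cw S G. tp S G' \<subseteq> s}"
    using assms(3) tp_min unfolding Cw_def by blast
next
  show "{s \<in> Cw S G. tp S G' \<subseteq> s} \<subseteq> Cw S G'"
  proof
    fix s assume s: "s \<in> {s \<in> Cw S G. tp S G' \<subseteq> s}"
    then obtain D where D: "s = tp S D" "pth D" "G \<subseteq> D" unfolding Cw_def by blast
    have "D \<subseteq> G' \<or> G' \<subseteq> D" using linear[OF assms(1) D(2) assms(2) D(3) assms(3)] .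
    then show "s \<in> Cw S G'"
    proof
      assume "G' \<subseteq> D" then show ?thesis using D unfolding Cw_def by blast
    next
      assume "D \<subseteq> G'"
      then have "s = tp S G'" using s D unfolding tp_def by blast
      then show ?thesis using tp_in assms(2) by blast
    qed
  qed
qed

lemma L3:
  assumes "pth G" "pth G'" "G \<subseteq> G'"
  shows "(Cw S G, Cw S G') \<in> LeC S"
proof -
  have e: "Cw S G' = {s \<in> Cw S G. tp S G' \<subseteq> s}" using L2[OF assms] .
  have "\<forall>s\<in>Cw S G. \<forall>s'\<in>Cw S G'. s' \<subseteq> s \<longrightarrow> s \<in> Cw S G'"
    using e tp_min by (metis (no_types, lifting) mem_Collect_eq order_trans)
  then show ?thesis unfolding LeC_def using Cw_in assms e by blast
qed

lemma L4:
  assumes G: "pth G" and u: "(Cw S G, u) \<in> LeC S"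
  shows "\<exists>G'. pth G' \<and> G \<subseteq> G' \<and> u = Cw S G'"
proof -
  have uW: "u \<in> Wc S" and sub: "u \<subseteq> Cw S G"
    and up: "\<forall>s\<in>Cw S G. \<forall>s'\<in>u. s' \<subseteq> s \<longrightarrow> s \<in> u" using u unfolding LeC_def by auto
  obtain G0 where G0: "pth G0" "u = Cw S G0" using uW unfolding Wc_def by blast
  have "tp S G0 \<in> Cw S G" using sub G0 tp_in by blast
  then obtain G2 where G2: "tp S G0 = tp S G2" "pth G2" "G \<subseteq> G2" unfolding Cw_def by blast
  have e: "Cw S G2 = {s \<in> Cw S G. tp S G2 \<subseteq> s}" using L2[OF G G2(2,3)] .
  have "u = Cw S G2"
  proof
    show "u \<subseteq> Cw S G2" using e sub G0 G2(1) tp_min by blast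
  next
    show "Cw S G2 \<subseteq> u"
    proof
      fix s assume "s \<in> Cw S G2"
      then have "s \<in> Cw S G" "tp S G0 \<subseteq> s" using e G2(1) by auto
      moreover have "tp S G0 \<in> u" using G0 tp_in by blast
      ultimately show "s \<in> u" using up by blast
    qed
  qed
  then show ?thesis using G2 by blast
qed

lemma Wc_cases: "w \<in> Wc S \<Longrightarrow> \<exists>G. pth G \<and> w = Cw S G"
  unfolding Wc_def by blast

lemma LeC_W: "LeC S \<subseteq> Wc S \<times> Wc S" unfolding LeC_def by blast

lemma LeC_refl: "w \<in> Wc S \<Longrightarrow> (w, w) \<in> LeC S" unfolding LeC_def by blast

lemma LeC_trans: "trans (LeC S)"
proof (rule transI)
  fix x y z assume xy: "(x, y) \<in> LeC S" and yz: "(y, z) \<in> LeC S"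
  have 1: "x \<in> Wc S" "y \<subseteq> x" "\<forall>s\<in>x. \<forall>s'\<in>y. s' \<subseteq> s \<longrightarrow> s \<in> y"
    using xy unfolding LeC_def by auto
  have 2: "z \<in> Wc S" "z \<subseteq> y" "\<forall>s\<in>y. \<forall>s'\<in>z. s' \<subseteq> s \<longrightarrow> s \<in> z"
    using yz unfolding LeC_def by auto
  have "\<forall>s\<in>x. \<forall>s'\<in>z. s' \<subseteq> s \<longrightarrow> s \<in> z"
  proof (intro ballI impI)
    fix s s' assume "s \<in> x" "s' \<in> z" "s' \<subseteq> s"
    have "s' \<in> y" using 2(2) \<open>s' \<in> z\<close> by (rule subsetD)
    have "s \<in> y" by (rule 1(3)[rule_format, OF \<open>s \<in> x\<close> \<open>s' \<in> y\<close> \<open>s' \<subseteq> s\<close>])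
    show "s \<in> z" by (rule 2(3)[rule_format, OF \<open>s \<in> y\<close> \<open>s' \<in> z\<close> \<open>s' \<subseteq> s\<close>])
  qed
  moreover have "z \<subseteq> x" using 1(2) 2(2) by (rule order_trans[rotated])
  ultimately show "(x, z) \<in> LeC S" unfolding LeC_def using 1(1) 2(1) by simp
qed

lemma LeC_linear: "locally_linear (LeC S)"
  unfolding locally_linear_def
proof (intro allI impI)
  fix w u v assume wu: "(w, u) \<in> LeC S" and wv: "(w, v) \<in> LeC S"
  have "w \<in> Wc S" using wu unfolding LeC_def by blast
  then obtain G where G: "pth G" "w = Cw S G" using Wc_cases by blast
  obtain G1 where G1: "pth G1" "G \<subseteq> G1" "u = Cw S G1" using L4 G wu by blast
  obtain G2 where G2: "pth G2" "G \<subseteq> G2" "v = Cw S G2" using L4 G wv by blast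
  have "G1 \<subseteq> G2 \<or> G2 \<subseteq> G1" using linear G G1 G2 by blast
  then show "(u, v) \<in> LeC S \<or> (v, u) \<in> LeC S" using L3 G1 G2 by blast
qed

lemma Bc_W: "Bc S \<subseteq> Wc S \<times> Wc S" unfolding Bc_def using Cw_in by blast

lemma Bc_trancl_W: "(Bc S)\<^sup>+ \<subseteq> Wc S \<times> Wc S"
  using Bc_W trancl_subset_Sigma by blast

lemma SqC_W: "SqC S \<subseteq> Wc S \<times> Wc S"
  unfolding SqC_def using Bc_trancl_W by (auto simp: Id_on_def)

lemma SqC_trans: "trans (SqC S)"
  unfolding SqC_def trans_def Id_on_def by (auto intro: trancl_trans)

lemma SqC_refl: "refl_on (Wc S) (SqC S)"
  unfolding refl_on_def using SqC_W unfolding SqC_def by auto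

definition TRt :: "fm set \<Rightarrow> fm set \<Rightarrow> fm set \<Rightarrow> bool" where
  "TRt S s s' \<longleftrightarrow> (\<forall>a. Box a \<in> S \<longrightarrow> Box a \<in> s \<longrightarrow> a \<in> s' \<and> Box a \<in> s')
     \<and> (\<forall>a. Dia a \<in> S \<longrightarrow> (a \<in> s' \<or> Dia a \<in> s') \<longrightarrow> Dia a \<in> s)"

lemma TRt_trans: "TRt S s1 s2 \<Longrightarrow> TRt S s2 s3 \<Longrightarrow> TRt S s1 s3"
  unfolding TRt_def by blast

lemma bsS: "\<forall>x\<in>S. sub x \<subseteq> S \<Longrightarrow> Box a \<in> S \<Longrightarrow> a \<in> S"
proof -
  assume "\<forall>x\<in>S. sub x \<subseteq> S" "Box a \<in> S"
  then have "sub (Box a) \<subseteq> S" by blast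
  then show ?thesis by (auto simp: sub_refl)
qed

lemma dsS: "\<forall>x\<in>S. sub x \<subseteq> S \<Longrightarrow> Dia a \<in> S \<Longrightarrow> a \<in> S"
proof -
  assume "\<forall>x\<in>S. sub x \<subseteq> S" "Dia a \<in> S"
  then have "sub (Dia a) \<subseteq> S" by blast
  then show ?thesis by (auto simp: sub_refl)
qed

lemma TRt_sqc:
  assumes cl: "\<forall>x\<in>S. sub x \<subseteq> S" and G: "pth G" and D: "pth D" and sq: "sqc G D"
  shows "TRt S (tp S G) (tp S D)"
  unfolding TRt_def tp_def
proof (rule conjI; intro allI impI)
  fix a assume a: "Box a \<in> S" "Box a \<in> G \<inter> S"
  have "a \<in> D" using sq a unfolding sqc_def by blast
  moreover have "Box a \<in> D" using sqc_box4[OF G sq] a by blast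
  moreover have "a \<in> S" using bsS[OF cl a(1)] .
  ultimately show "a \<in> D \<inter> S \<and> Box a \<in> D \<inter> S" using a by blast
next
  fix a assume a: "Dia a \<in> S" "a \<in> D \<inter> S \<or> Dia a \<in> D \<inter> S"
  then have "Dia a \<in> G" using sq sqc_dia4[OF G sq] unfolding sqc_def by blast
  then show "Dia a \<in> G \<inter> S" using a by blast
qed

lemma TRt_refl:
  assumes cl: "\<forall>x\<in>S. sub x \<subseteq> S" and G: "pth G" shows "TRt S (tp S G) (tp S G)"
  unfolding TRt_def tp_def
proof (rule conjI; intro allI impI)
  fix a assume a: "Box a \<in> S" "Box a \<in> G \<inter> S"
  have "a \<in> G" using pth_T G a by blast
  moreover have "a \<in> S" using bsS[OF cl a(1)] .
  ultimately show "a \<in> G \<inter> S \<and> Box a \<in> G \<inter> S" using a by blast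
next
  fix a assume a: "Dia a \<in> S" "a \<in> G \<inter> S \<or> Dia a \<in> G \<inter> S"
  then have "Dia a \<in> G" using pth_TD G by blast
  then show "Dia a \<in> G \<inter> S" using a by blast
qed

lemma Bc_trancl_TR:
  assumes cl: "\<forall>x\<in>S. sub x \<subseteq> S"
  shows "(w, v) \<in> (Bc S)\<^sup>+ \<Longrightarrow> \<forall>G D. pth G \<longrightarrow> pth D \<longrightarrow> w = Cw S G \<longrightarrow> v = Cw S D
           \<longrightarrow> TRt S (tp S G) (tp S D)"
proof (induction rule: trancl_induct)
  case (base y)
  then obtain G0 D0 where B: "w = Cw S G0" "y = Cw S D0" "pth G0" "pth D0" "sqc G0 D0"
    unfolding Bc_def by auto
  show ?case
  proof (intro allI impI)
    fix G D assume H: "pth G" "pth D" "w = Cw S G" "y = Cw S D"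
    have "tp S G = tp S G0" using Cw_tp[OF H(1) B(3)] H(3) B(1) by simp
    moreover have "tp S D = tp S D0" using Cw_tp[OF H(2) B(4)] H(4) B(2) by simp
    ultimately show "TRt S (tp S G) (tp S D)" using TRt_sqc[OF cl B(3,4,5)] by simp
  qed
next
  case (step y z)
  then obtain Y0 D0 where Y: "y = Cw S Y0" "z = Cw S D0" "pth Y0" "pth D0" "sqc Y0 D0"
    unfolding Bc_def by auto
  show ?case
  proof (intro allI impI)
    fix G D assume "pth G" "pth D" "w = Cw S G" "z = Cw S D"
    then have "TRt S (tp S G) (tp S Y0)" using step.IH[rule_format, OF \<open>pth G\<close> Y(3) \<open>w = Cw S G\<close> Y(1)] by simp
    moreover have "tp S D = tp S D0" using Cw_tp[OF \<open>pth D\<close> Y(4)] \<open>z = Cw S D\<close> Y(2) by simp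
    moreover have "TRt S (tp S Y0) (tp S D0)" using TRt_sqc[OF cl Y(3,4,5)] .
    ultimately show "TRt S (tp S G) (tp S D)" using TRt_trans by metis
  qed
qed

lemma SqC_TR:
  assumes cl: "\<forall>x\<in>S. sub x \<subseteq> S" and "(Cw S G, Cw S D) \<in> SqC S" "pth G" "pth D"
  shows "TRt S (tp S G) (tp S D)"
  using assms(2)
  unfolding SqC_def
proof
  assume "(Cw S G, Cw S D) \<in> Id_on (Wc S)"
  then have "Cw S G = Cw S D" by (simp add: Id_on_def)
  then have "tp S G = tp S D" using Cw_tp assms(3,4) by blast
  then show ?thesis using TRt_refl[OF cl assms(3)] by simp
next
  assume "(Cw S G, Cw S D) \<in> (Bc S)\<^sup>+"
  then show ?thesis using Bc_trancl_TR[OF cl] assms(3,4) by blast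
qed

lemma FB:
  assumes "(w, w') \<in> LeC S" "(w, v) \<in> Bc S"
  shows "\<exists>v'. (v, v') \<in> LeC S \<and> (w', v') \<in> Bc S"
proof -
  obtain G D where GD: "w = Cw S G" "v = Cw S D" "pth G" "pth D" "sqc G D"
    using assms(2) unfolding Bc_def by auto
  obtain G' where G': "pth G'" "G \<subseteq> G'" "w' = Cw S G'" using L4 GD assms(1) by blast
  obtain D' where D': "pth D'" "D \<subseteq> D'" "sqc G' D'" using fconf GD G' by blast
  have "(v, Cw S D') \<in> LeC S" using L3 GD D' by blast
  moreover have "(w', Cw S D') \<in> Bc S" unfolding Bc_def using G' D' by blast
  ultimately show ?thesis by blast
qed

lemma BB:
  assumes "(w, v) \<in> Bc S" "(v, v') \<in> LeC S"
  shows "\<exists>w'. (w, w') \<in> LeC S \<and> (w', v') \<in> Bc S"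
proof -
  obtain G D where GD: "w = Cw S G" "v = Cw S D" "pth G" "pth D" "sqc G D"
    using assms(1) unfolding Bc_def by auto
  obtain D' where D': "pth D'" "D \<subseteq> D'" "v' = Cw S D'" using L4 GD assms(2) by blast
  obtain G' where G': "pth G'" "G \<subseteq> G'" "sqc G' D'" using bconf GD D' by blast
  have "(w, Cw S G') \<in> LeC S" using L3 GD G' by blast
  moreover have "(Cw S G', v') \<in> Bc S" unfolding Bc_def using G' D' by blast
  ultimately show ?thesis by blast
qed

lemma FB_trancl:
  "(w, v) \<in> (Bc S)\<^sup>+ \<Longrightarrow> \<forall>w'. (w, w') \<in> LeC S \<longrightarrow> (\<exists>v'. (v, v') \<in> LeC S \<and> (w', v') \<in> (Bc S)\<^sup>+)"
proof (induction rule: trancl_induct)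
  case (base y)
  then show ?case using FB by blast
next
  case (step y z)
  show ?case
  proof (intro allI impI)
    fix w' assume "(w, w') \<in> LeC S"
    then obtain y' where "(y, y') \<in> LeC S" "(w', y') \<in> (Bc S)\<^sup>+" using step.IH by blast
    moreover obtain z' where "(z, z') \<in> LeC S" "(y', z') \<in> Bc S" using FB[OF \<open>(y, y') \<in> LeC S\<close> step.hyps(2)] by blast
    ultimately show "\<exists>v'. (z, v') \<in> LeC S \<and> (w', v') \<in> (Bc S)\<^sup>+" by (meson trancl.trancl_into_trancl)
  qed
qed

lemma BB_trancl:
  "(w, v) \<in> (Bc S)\<^sup>+ \<Longrightarrow> \<forall>v'. (v, v') \<in> LeC S \<longrightarrow> (\<exists>w'. (w, w') \<in> LeC S \<and> (w', v') \<in> (Bc S)\<^sup>+)"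
proof (induction rule: converse_trancl_induct)
  case (base y)
  then show ?case using BB by blast
next
  case (step y z)
  show ?case
  proof (intro allI impI)
    fix v' assume "(v, v') \<in> LeC S"
    then obtain z' where "(z, z') \<in> LeC S" "(z', v') \<in> (Bc S)\<^sup>+" using step.IH by blast
    moreover obtain y' where "(y, y') \<in> LeC S" "(y', z') \<in> Bc S" using BB[OF step.hyps(1) \<open>(z, z') \<in> LeC S\<close>] by blast
    ultimately show "\<exists>w'. (y, w') \<in> LeC S \<and> (w', v') \<in> (Bc S)\<^sup>+" by (meson trancl_into_trancl2)
  qed
qed

lemma SqC_fconf: "forward_confluent (LeC S) (SqC S)"
  unfolding forward_confluent_def
proof (intro allI impI)
  fix w w' v assume wl: "(w, w') \<in> LeC S" and wv: "(w, v) \<in> SqC S"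
  show "\<exists>v'. (v, v') \<in> LeC S \<and> (w', v') \<in> SqC S"
  proof (cases "(w, v) \<in> Id_on (Wc S)")
    case True
    then have "v = w" by (auto simp: Id_on_def)
    moreover have "(w', w') \<in> SqC S" using wl LeC_W unfolding SqC_def by (auto simp: Id_on_def)
    ultimately show ?thesis using wl by blast
  next
    case False
    then have "(w, v) \<in> (Bc S)\<^sup>+" using wv unfolding SqC_def by blast
    then show ?thesis using FB_trancl wl unfolding SqC_def by blast
  qed
qed

lemma SqC_bconf: "backward_confluent (LeC S) (SqC S)"
  unfolding backward_confluent_def
proof (intro allI impI)
  fix w v v' assume wv: "(w, v) \<in> SqC S" and vl: "(v, v') \<in> LeC S"
  show "\<exists>w'. (w, w') \<in> LeC S \<and> (w', v') \<in> SqC S"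
  proof (cases "(w, v) \<in> Id_on (Wc S)")
    case True
    then have "v = w" by (auto simp: Id_on_def)
    moreover have "(v', v') \<in> SqC S" using vl LeC_W unfolding SqC_def by (auto simp: Id_on_def)
    ultimately show ?thesis using vl by blast
  next
    case False
    then have "(w, v) \<in> (Bc S)\<^sup>+" using wv unfolding SqC_def by blast
    then show ?thesis using BB_trancl vl unfolding SqC_def by blast
  qed
qed

lemma pth_and_iff: "pth G \<Longrightarrow> And a b \<in> G \<longleftrightarrow> a \<in> G \<and> b \<in> G"
  by (meson andE1 andE2 andI der.hyp pth_der)

lemma pth_or_iff: "pth G \<Longrightarrow> Or a b \<in> G \<longleftrightarrow> a \<in> G \<or> b \<in> G"
  by (meson orI1 orI2 der.hyp pth_der pth_or)

lemma truth:
  assumes cl: "\<forall>x\<in>S. sub x \<subseteq> S"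
  shows "sub a \<subseteq> S \<Longrightarrow> pth G \<Longrightarrow> sat {} (LeC S) (SqC S) (Vc S) (Cw S G) a \<longleftrightarrow> a \<in> G"
proof (induction a arbitrary: G)
  case (Var p)
  have pS: "Var p \<in> S" using Var.prems by simp
  show ?case
  proof
    assume "sat {} (LeC S) (SqC S) (Vc S) (Cw S G) (Var p)"
    then have "Cw S G \<in> Vc S p" by simp
    then obtain G0 where G0: "pth G0" "Cw S G = Cw S G0" "Var p \<in> tp S G0" unfolding Vc_def by blast
    have "tp S G = tp S G0" using Cw_tp[OF Var.prems(2) G0(1) G0(2)] .
    then show "Var p \<in> G" using G0(3) unfolding tp_def by blast
  next
    assume "Var p \<in> G"
    then have "Var p \<in> tp S G" using pS unfolding tp_def by blast
    then have "Cw S G \<in> Vc S p" unfolding Vc_def using Cw_in[OF Var.prems(2)] Var.prems(2) by blast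
    then show "sat {} (LeC S) (SqC S) (Vc S) (Cw S G) (Var p)" by simp
  qed
next
  case Bot
  then show ?case using pth_bot by simp
next
  case (And a b)
  then have "sub a \<subseteq> S" "sub b \<subseteq> S" by auto
  then show ?case using And.IH And.prems(2) pth_and_iff by simp
next
  case (Or a b)
  then have "sub a \<subseteq> S" "sub b \<subseteq> S" by auto
  then show ?case using Or.IH Or.prems(2) pth_or_iff by simp
next
  case (Imp a b)
  then have sa: "sub a \<subseteq> S" and sb: "sub b \<subseteq> S" by auto
  have G: "pth G" by fact
  show ?case
  proof
    assume H: "sat {} (LeC S) (SqC S) (Vc S) (Cw S G) (Imp a b)"
    show "Imp a b \<in> G"
    proof (rule ccontr)
      assume "Imp a b \<notin> G"
      then have "\<not> der (insert a G) b" using ded pth_der G by blast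
      then obtain D where D: "pth D" "insert a G \<subseteq> D" "b \<notin> D" using lindenbaum1 by blast
      have le: "(Cw S G, Cw S D) \<in> LeC S" using L3 G D by blast
      have "sat {} (LeC S) (SqC S) (Vc S) (Cw S D) a" using Imp.IH(1)[OF sa D(1)] D(2) by blast
      then have "sat {} (LeC S) (SqC S) (Vc S) (Cw S D) b" using H le by simp
      then show False using Imp.IH(2)[OF sb D(1)] D(3) by blast
    qed
  next
    assume I: "Imp a b \<in> G"
    show "sat {} (LeC S) (SqC S) (Vc S) (Cw S G) (Imp a b)"
      unfolding sat.simps
    proof (intro allI impI)
      fix v assume v: "(Cw S G, v) \<in> LeC S" and va: "sat {} (LeC S) (SqC S) (Vc S) v a"
      obtain G' where G': "pth G'" "G \<subseteq> G'" "v = Cw S G'" using L4[OF G v] by blast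
      have "a \<in> G'" using Imp.IH(1)[OF sa G'(1)] va G'(3) by blast
      moreover have "Imp a b \<in> G'" using I G'(2) by blast
      ultimately have "b \<in> G'" using pth_mp G'(1) by blast
      then show "sat {} (LeC S) (SqC S) (Vc S) v b" using Imp.IH(2)[OF sb G'(1)] G'(3) by blast
    qed
  qed
next
  case (Box a)
  then have sa: "sub a \<subseteq> S" and bS: "Box a \<in> S" by auto
  have G: "pth G" by fact
  show ?case
  proof
    assume H: "sat {} (LeC S) (SqC S) (Vc S) (Cw S G) (Box a)"
    show "Box a \<in> G"
    proof (rule ccontr)
      assume "Box a \<notin> G"
      then obtain G' D where GD: "pth G'" "pth D" "G \<subseteq> G'" "sqc G' D" "a \<notin> D"
        using box_exist[OF G] by blast
      have le: "(Cw S G, Cw S G') \<in> LeC S" using L3 G GD by blast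
      have "(Cw S G', Cw S D) \<in> Bc S" unfolding Bc_def using GD by blast
      then have sq: "(Cw S G', Cw S D) \<in> SqC S" unfolding SqC_def by blast
      have "sat {} (LeC S) (SqC S) (Vc S) (Cw S D) a" using H le sq by simp
      then show False using Box.IH[OF sa GD(2)] GD(5) by blast
    qed
  next
    assume I: "Box a \<in> G"
    show "sat {} (LeC S) (SqC S) (Vc S) (Cw S G) (Box a)"
      unfolding sat.simps
    proof (intro allI impI)
      fix u v assume u: "(Cw S G, u) \<in> LeC S" and v: "(u, v) \<in> SqC S"
      obtain G' where G': "pth G'" "G \<subseteq> G'" "u = Cw S G'" using L4[OF G u] by blast
      have "v \<in> Wc S" using v SqC_W by blast
      then obtain D where D: "pth D" "v = Cw S D" using Wc_cases by blast
      have "TRt S (tp S G') (tp S D)" using SqC_TR[OF cl _ G'(1) D(1)] v G'(3) D(2) by blast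
      moreover have "Box a \<in> tp S G'" using I G'(2) bS unfolding tp_def by blast
      ultimately have "a \<in> D" using bS unfolding TRt_def tp_def by blast
      then show "sat {} (LeC S) (SqC S) (Vc S) v a" using Box.IH[OF sa D(1)] D(2) by blast
    qed
  qed
next
  case (Dia a)
  then have sa: "sub a \<subseteq> S" and dS: "Dia a \<in> S" by auto
  have G: "pth G" by fact
  show ?case
  proof
    assume H: "sat {} (LeC S) (SqC S) (Vc S) (Cw S G) (Dia a)"
    show "Dia a \<in> G"
    proof (rule ccontr)
      assume nd: "Dia a \<notin> G"
      have "(Cw S G, Cw S G) \<in> LeC S" using LeC_refl Cw_in G by blast
      then obtain v where v: "(Cw S G, v) \<in> SqC S" "sat {} (LeC S) (SqC S) (Vc S) v a"
        using H by auto
      have "v \<in> Wc S" using v SqC_W by blast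
      then obtain D where D: "pth D" "v = Cw S D" using Wc_cases by blast
      have "TRt S (tp S G) (tp S D)" using SqC_TR[OF cl _ G D(1)] v D(2) by blast
      moreover have "a \<in> D" using Dia.IH[OF sa D(1)] v(2) D(2) by blast
      moreover have "a \<in> S" using sa sub_refl by blast
      ultimately have "Dia a \<in> tp S G" using dS unfolding TRt_def tp_def by blast
      then show False using nd unfolding tp_def by blast
    qed
  next
    assume I: "Dia a \<in> G"
    show "sat {} (LeC S) (SqC S) (Vc S) (Cw S G) (Dia a)"
      unfolding sat.simps
    proof (intro allI impI)
      fix u assume u: "(Cw S G, u) \<in> LeC S"
      obtain G' where G': "pth G'" "G \<subseteq> G'" "u = Cw S G'" using L4[OF G u] by blast
      obtain D where D: "pth D" "sqc G' D" "a \<in> D" using dia_exist[OF G'(1)] I G'(2) by blast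
      have "(Cw S G', Cw S D) \<in> Bc S" unfolding Bc_def using G' D by blast
      then have sq: "(u, Cw S D) \<in> SqC S" unfolding SqC_def using G'(3) by blast
      have "sat {} (LeC S) (SqC S) (Vc S) (Cw S D) a" using Dia.IH[OF sa D(1)] D(3) by blast
      then show "\<exists>v. (u, v) \<in> SqC S \<and> sat {} (LeC S) (SqC S) (Vc S) v a" using sq by blast
    qed
  qed
qed

lemma finite_Wc: "finite S \<Longrightarrow> finite (Wc S)"
proof -
  assume "finite S"
  have "Wc S \<subseteq> Pow (Pow S)" unfolding Wc_def Cw_def tp_def by blast
  then show ?thesis using \<open>finite S\<close> by (meson finite_Pow_iff finite_subset)
qed

lemma Vc_up: "up_closed (LeC S) (Vc S p)"
  unfolding up_closed_def
proof (intro allI impI)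
  fix w v assume w: "w \<in> Vc S p" and wv: "(w, v) \<in> LeC S"
  obtain G where G: "pth G" "w = Cw S G" "Var p \<in> tp S G" using w unfolding Vc_def by blast
  obtain G' where G': "pth G'" "G \<subseteq> G'" "v = Cw S G'" using L4[OF G(1)] wv G(2) by blast
  have "Var p \<in> tp S G'" using G(3) G'(2) unfolding tp_def by blast
  then show "v \<in> Vc S p" unfolding Vc_def using G' Cw_in by blast
qed

lemma model_ok: "GS4_model (Wc S) {} (LeC S) (SqC S) (Vc S)"
proof -
  have p1: "preorder_on (Wc S) (LeC S)"
    unfolding preorder_on_def refl_on_def using LeC_W LeC_refl LeC_trans by blast
  have p2: "preorder_on (Wc S) (SqC S)"
    unfolding preorder_on_def using SqC_W SqC_refl SqC_trans by blast
  have "biint_frame (Wc S) {} (LeC S) (SqC S)"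
    unfolding biint_frame_def using p1 p2 by (simp add: up_closed_def)
  moreover have "\<forall>p. Vc S p \<subseteq> Wc S \<and> up_closed (LeC S) (Vc S p) \<and> {} \<subseteq> Vc S p"
    using Vc_up unfolding Vc_def by blast
  ultimately show ?thesis unfolding GS4_model_def biint_model_def
    using LeC_linear SqC_fconf SqC_bconf by blast
qed

lemma main_fm:
  assumes "\<not> GS4_derivable \<phi>"
  shows "\<exists>(W :: fm set set set) Wb Le Sq V. finite W \<and> GS4_model W Wb Le Sq V
            \<and> \<not> valid_in W Wb Le Sq V \<phi>"
proof -
  let ?S = "sub \<phi>"
  have cl: "\<forall>x\<in>?S. sub x \<subseteq> ?S" using sub_trans by blast
  have "\<not> der {} \<phi>" using assms der_empty by blast
  then obtain G where G: "pth G" "{} \<subseteq> G" "\<phi> \<notin> G" using lindenbaum1 by blast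
  have "\<not> sat {} (LeC ?S) (SqC ?S) (Vc ?S) (Cw ?S G) \<phi>" using truth[OF cl order_refl G(1)] G(3) by blast
  then have "\<not> valid_in (Wc ?S) {} (LeC ?S) (SqC ?S) (Vc ?S) \<phi>"
    unfolding valid_in_def using Cw_in[OF G(1)] by blast
  then show ?thesis using model_ok finite_Wc[OF finite_sub] by blast
qed

lemma transfer:
  fixes W :: "'a set"
  assumes fin: "finite W" and M: "GS4_model W Wb Le Sq V" and nv: "\<not> valid_in W Wb Le Sq V \<phi>"
  shows "\<exists>(W' :: nat set) Wb' Le' Sq' V'. finite W' \<and> GS4_model W' Wb' Le' Sq' V'
            \<and> \<not> valid_in W' Wb' Le' Sq' V' \<phi>"
proof -
  obtain n :: nat and h where hW: "W = h ` {i. i < n}" using finite_imp_nat_seg_image_inj_on[OF fin] by blast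
  define W' where "W' = {i::nat. i < n}"
  define Le' where "Le' = {(x, y). x \<in> W' \<and> y \<in> W' \<and> (h x, h y) \<in> Le}"
  define Sq' where "Sq' = {(x, y). x \<in> W' \<and> y \<in> W' \<and> (h x, h y) \<in> Sq}"
  define V' where "V' = (\<lambda>p. {x \<in> W'. h x \<in> V p})"
  have Wb: "Wb = {}" using M unfolding GS4_model_def by blast
  have bm: "biint_model W Wb Le Sq V" using M unfolding GS4_model_def by blast
  have bf: "biint_frame W Wb Le Sq" using bm unfolding biint_model_def by blast
  have LeP: "preorder_on W Le" and SqP: "preorder_on W Sq" using bf unfolding biint_frame_def by blast+
  have LeW: "Le \<subseteq> W \<times> W" and SqW: "Sq \<subseteq> W \<times> W" using LeP SqP unfolding preorder_on_def by blast+
  have Vup: "up_closed Le (V p)" for p using bm unfolding biint_model_def by blast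
  have hin: "x \<in> W' \<Longrightarrow> h x \<in> W" for x unfolding W'_def hW by blast
  have surj: "u \<in> W \<Longrightarrow> \<exists>v\<in>W'. u = h v" for u unfolding W'_def hW by blast
  have key: "x \<in> W' \<Longrightarrow> sat {} Le' Sq' V' x a \<longleftrightarrow> sat {} Le Sq V (h x) a" for x a
  proof (induction a arbitrary: x)
    case (Var p) then show ?case by (simp add: V'_def)
  next
    case Bot then show ?case by simp
  next
    case (And a b) then show ?case by simp
  next
    case (Or a b) then show ?case by simp
  next
    case (Imp a b)
    show ?case
    proof
      assume L: "sat {} Le' Sq' V' x (Imp a b)"
      show "sat {} Le Sq V (h x) (Imp a b)"
        unfolding sat.simps
      proof (intro allI impI)
        fix u assume u: "(h x, u) \<in> Le" "sat {} Le Sq V u a"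
        then have "u \<in> W" using LeW by blast
        then obtain v where v: "v \<in> W'" "u = h v" using surj by blast
        have "(x, v) \<in> Le'" unfolding Le'_def using Imp.prems v u by blast
        moreover have "sat {} Le' Sq' V' v a" using Imp.IH(1)[OF v(1)] u v by blast
        ultimately have "sat {} Le' Sq' V' v b" using L by simp
        then show "sat {} Le Sq V u b" using Imp.IH(2)[OF v(1)] v by blast
      qed
    next
      assume R: "sat {} Le Sq V (h x) (Imp a b)"
      show "sat {} Le' Sq' V' x (Imp a b)"
        unfolding sat.simps
      proof (intro allI impI)
        fix v assume v: "(x, v) \<in> Le'" "sat {} Le' Sq' V' v a"
        then have vW: "v \<in> W'" and hv: "(h x, h v) \<in> Le" unfolding Le'_def by auto
        have "sat {} Le Sq V (h v) a" using Imp.IH(1)[OF vW] v by blast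
        then have "sat {} Le Sq V (h v) b" using R hv by simp
        then show "sat {} Le' Sq' V' v b" using Imp.IH(2)[OF vW] by blast
      qed
    qed
  next
    case (Box a)
    show ?case
    proof
      assume L: "sat {} Le' Sq' V' x (Box a)"
      show "sat {} Le Sq V (h x) (Box a)"
        unfolding sat.simps
      proof (intro allI impI)
        fix u v assume u: "(h x, u) \<in> Le" and v: "(u, v) \<in> Sq"
        then have "u \<in> W" "v \<in> W" using LeW SqW by blast+
        then obtain u' v' where uv: "u' \<in> W'" "u = h u'" "v' \<in> W'" "v = h v'" using surj by metis
        have "(x, u') \<in> Le'" unfolding Le'_def using Box.prems uv u by blast
        moreover have "(u', v') \<in> Sq'" unfolding Sq'_def using uv v by blast
        ultimately have "sat {} Le' Sq' V' v' a" using L by simp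
        then show "sat {} Le Sq V v a" using Box.IH[OF uv(3)] uv by blast
      qed
    next
      assume R: "sat {} Le Sq V (h x) (Box a)"
      show "sat {} Le' Sq' V' x (Box a)"
        unfolding sat.simps
      proof (intro allI impI)
        fix u v assume u: "(x, u) \<in> Le'" and v: "(u, v) \<in> Sq'"
        then have vW: "v \<in> W'" and hu: "(h x, h u) \<in> Le" and hv: "(h u, h v) \<in> Sq"
          unfolding Le'_def Sq'_def by auto
        have "sat {} Le Sq V (h v) a" using R hu hv by simp
        then show "sat {} Le' Sq' V' v a" using Box.IH[OF vW] by blast
      qed
    qed
  next
    case (Dia a)
    show ?case
    proof
      assume L: "sat {} Le' Sq' V' x (Dia a)"
      show "sat {} Le Sq V (h x) (Dia a)"
        unfolding sat.simps
      proof (intro allI impI)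
        fix u assume u: "(h x, u) \<in> Le"
        then have "u \<in> W" using LeW by blast
        then obtain u' where uv: "u' \<in> W'" "u = h u'" using surj by metis
        have "(x, u') \<in> Le'" unfolding Le'_def using Dia.prems uv u by blast
        then obtain v' where v': "(u', v') \<in> Sq'" "sat {} Le' Sq' V' v' a" using L by auto
        then have vW: "v' \<in> W'" and hv: "(u, h v') \<in> Sq" unfolding Sq'_def using uv by auto
        have "sat {} Le Sq V (h v') a" using Dia.IH[OF vW] v' by blast
        then show "\<exists>v. (u, v) \<in> Sq \<and> sat {} Le Sq V v a" using hv by blast
      qed
    next
      assume R: "sat {} Le Sq V (h x) (Dia a)"
      show "sat {} Le' Sq' V' x (Dia a)"
        unfolding sat.simps
      proof (intro allI impI)
        fix u assume u: "(x, u) \<in> Le'"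
        then have uW: "u \<in> W'" and hu: "(h x, h u) \<in> Le" unfolding Le'_def by auto
        obtain v where v: "(h u, v) \<in> Sq" "sat {} Le Sq V v a" using R hu by auto
        then have "v \<in> W" using SqW by blast
        then obtain v' where vv: "v' \<in> W'" "v = h v'" using surj by metis
        have "(u, v') \<in> Sq'" unfolding Sq'_def using uW vv v by blast
        moreover have "sat {} Le' Sq' V' v' a" using Dia.IH[OF vv(1)] vv v by blast
        ultimately show "\<exists>v. (u, v) \<in> Sq' \<and> sat {} Le' Sq' V' v a" by blast
      qed
    qed
  qed
  have p1: "preorder_on W' Le'"
    unfolding preorder_on_def
  proof (intro conjI)
    show "Le' \<subseteq> W' \<times> W'" unfolding Le'_def by blast
    show "refl_on W' Le'" unfolding refl_on_def Le'_def
      using LeP hin unfolding preorder_on_def refl_on_def by blast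
    have "trans Le" using LeP unfolding preorder_on_def by blast
    then show "trans Le'" unfolding trans_def Le'_def by blast
  qed
  have p2: "preorder_on W' Sq'"
    unfolding preorder_on_def
  proof (intro conjI)
    show "Sq' \<subseteq> W' \<times> W'" unfolding Sq'_def by blast
    show "refl_on W' Sq'" unfolding refl_on_def Sq'_def
      using SqP hin unfolding preorder_on_def refl_on_def by blast
    have "trans Sq" using SqP unfolding preorder_on_def by blast
    then show "trans Sq'" unfolding trans_def Sq'_def by blast
  qed
  have bf': "biint_frame W' {} Le' Sq'"
    unfolding biint_frame_def using p1 p2 by (simp add: up_closed_def)
  have V'up: "up_closed Le' (V' p)" for p
    using Vup[of p] unfolding up_closed_def V'_def Le'_def by blast
  have bm': "biint_model W' {} Le' Sq' V'"
    unfolding biint_model_def using bf' V'up unfolding V'_def by blast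
  have ll: "locally_linear Le"
    and fc: "forward_confluent Le Sq" and bc: "backward_confluent Le Sq"
    using M unfolding GS4_model_def by blast+
  have ll': "locally_linear Le'"
    using ll unfolding locally_linear_def Le'_def by blast
  have fc': "forward_confluent Le' Sq'"
    unfolding forward_confluent_def
  proof (intro allI impI)
    fix w w' v assume a1: "(w, w') \<in> Le'" and a2: "(w, v) \<in> Sq'"
    then have "(h w, h w') \<in> Le" "(h w, h v) \<in> Sq" "w' \<in> W'" "v \<in> W'"
      unfolding Le'_def Sq'_def by auto
    then obtain z where z: "(h v, z) \<in> Le" "(h w', z) \<in> Sq" using fc unfolding forward_confluent_def by blast
    then have "z \<in> W" using LeW by blast
    then obtain z' where zz: "z' \<in> W'" "z = h z'" using surj by metis
    show "\<exists>v'. (v, v') \<in> Le' \<and> (w', v') \<in> Sq'"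
      using zz z \<open>w' \<in> W'\<close> \<open>v \<in> W'\<close> unfolding Le'_def Sq'_def by blast
  qed
  have bc': "backward_confluent Le' Sq'"
    unfolding backward_confluent_def
  proof (intro allI impI)
    fix w v v' assume a1: "(w, v) \<in> Sq'" and a2: "(v, v') \<in> Le'"
    then have "(h w, h v) \<in> Sq" "(h v, h v') \<in> Le" "w \<in> W'" "v' \<in> W'"
      unfolding Le'_def Sq'_def by auto
    then obtain z where z: "(h w, z) \<in> Le" "(z, h v') \<in> Sq" using bc unfolding backward_confluent_def by blast
    then have "z \<in> W" using LeW by blast
    then obtain z' where zz: "z' \<in> W'" "z = h z'" using surj by metis
    show "\<exists>w'. (w, w') \<in> Le' \<and> (w', v') \<in> Sq'"
      using zz z \<open>w \<in> W'\<close> \<open>v' \<in> W'\<close> unfolding Le'_def Sq'_def by blast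
  qed
  have M': "GS4_model W' {} Le' Sq' V'"
    unfolding GS4_model_def using bm' ll' fc' bc' by blast
  obtain w where w: "w \<in> W" "\<not> sat {} Le Sq V w \<phi>" using nv Wb unfolding valid_in_def by blast
  then obtain x where x: "x \<in> W'" "w = h x" using surj by metis
  have "\<not> sat {} Le' Sq' V' x \<phi>" using key[OF x(1)] x w by blast
  then have "\<not> valid_in W' {} Le' Sq' V' \<phi>" unfolding valid_in_def using x(1) by blast
  moreover have "finite W'" unfolding W'_def by simp
  ultimately show ?thesis using M' by blast
qed

theorem mainTheorem2:
  fixes \<phi> :: fm
  assumes "\<not> GS4_derivable \<phi>"
  shows "\<exists>(W :: nat set) Wb Le Sq V. finite W \<and> GS4_model W Wb Le Sq V
            \<and> \<not> valid_in W Wb Le Sq V \<phi>"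
proof -
  obtain W :: "fm set set set" and Wb Le Sq V where
    "finite W" "GS4_model W Wb Le Sq V" "\<not> valid_in W Wb Le Sq V \<phi>"
    using main_fm[OF assms] by blast
  then show ?thesis using transfer by blast
qed

end
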